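(* Let $(\mathbf M,\mathfrak I)$ be a ranked merge-model and let $\mathfrak C$ be the cleaning of $\mathfrak I$. Then for every positive integer $r$, $\mathrm w_r(\mathbf M,\mathfrak C)\le\mathrm w_r(\mathbf M,\mathfrak I)$.
   Context: Conventions. $\sigma$ is a finite set of binary relation symbols. $(V)_2=\{(u,v)\in V^2:u\ne v\}$. A tree-order is a partial order $\preceq$ with least element (root) such that elements below any element form a chain; maximal elements are leaves; $\pi(x)$ is the parent of non-root $x$; $x\parallel y$ = incomparable. For pairs, $(x,y)\preceq(x',y')$ iff $x\preceq x'$ and $y\preceq y'$; $\prec$ = $\preceq$ and distinct. Merge-models: $\sigma^*=\{\preceq\}\cup\{S_{Z,\alpha}:Z\in\sigma,\alpha\in\{0,1\}\}$, $S_Z=S_{Z,0}\cup S_{Z,1}$, $S=\bigcup_Z S_Z$. A merge-model is a finite $\sigma^*$-structure $\mathbf M$ with: (1) $\preceq$ a tree-order, root $\rho(\mathbf M)$, leaves $V(\mathbf M)$; (2) $S(x,y)\Rightarrow x=y$ or $x\parallel y$; (3) no $(x,y)\prec(x',y')$ with $S(x,y')$ and $S(x',y)$; (4) never both $S_{Z,0}(x,y)$ and $S_{Z,1}(x,y)$; (5) for all $Z$ and $(u,v)\in(V(\mathbf M))_2$ some $(x,y)\preceq(u,v)$ has $S_Z(x,y)$. Interval ranking: map $\mathfrak I$ from the domain to closed real intervals with $x\prec y\Rightarrow\max\mathfrak I(y)<\min\mathfrak I(x)$ and $S(x,y)\Rightarrow\mathfrak I(x)\cap\mathfrak I(y)\ne\emptyset$;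 $(\mathbf M,\mathfrak I)$ is a ranked merge-model. Cleaning: $f(x)=\min\mathfrak I(x)$ if $x$ is not a leaf, $f(x)=\min_{y\in V(\mathbf M)}\min\mathfrak I(y)$ if $x$ is a leaf; $g(x)=|\{f(y):y\in M, f(y)\le f(x)\}|$; $\mathfrak C(\rho(\mathbf M))=[g(\rho(\mathbf M)),g(\rho(\mathbf M))]$, $\mathfrak C(x)=[g(x),g(\pi(x))-1]$ otherwise. Merge-walks: for real $\tau<\min\mathfrak I(\rho(\mathbf M))$, a $\tau$-bounded merge-walk of order $n$ is $(u_0,v_1,u_1,\dots,v_n,u_n,v_{n+1})$ with $u_0$ a leaf; $u_{i-1},v_i$ comparable or equal ($1\le i\le n+1$); $S(v_i,u_i)$ and $\max(\mathfrak I(u_i)\cap\mathfrak I(v_i))\le\tau$ ($1\le i\le n$); $\min\mathfrak I(v_{n+1})\le\tau<\min\mathfrak I(\pi(v_{n+1}))$. $\mathrm{MWReach}_r(v,\tau)$ = set of such $v_{n+1}$ with $u_0=v$, $n\le r$; $\mathrm w_r(\mathbf M,\mathfrak I)=\max_\tau\max_{v\in V(\mathbf M)}|\mathrm{MWReach}_r(v,\tau)|$. *)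

theory Defs
  imports Main "HOL.Real"
begin

text \<open>A structure has finite domain M (type 'a), tree-order le, and relations
S Z alpha x y, where the index alpha in {0,1} is encoded as bool (False = 0, True = 1).\<close>

definition tree_order :: "'a set \<Rightarrow> ('a \<Rightarrow> 'a \<Rightarrow> bool) \<Rightarrow> bool" where
  "tree_order M le \<longleftrightarrow>
     (\<forall>x y. le x y \<longrightarrow> x \<in> M \<and> y \<in> M) \<and>
     (\<forall>x\<in>M. le x x) \<and>
     (\<forall>x\<in>M. \<forall>y\<in>M. le x y \<and> le y x \<longrightarrow> x = y) \<and>
     (\<forall>x\<in>M. \<forall>y\<in>M. \<forall>z\<in>M. le x y \<and> le y z \<longrightarrow> le x z) \<and>
     (\<exists>r\<in>M. \<forall>x\<in>M. le r x) \<and>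
     (\<forall>x\<in>M. \<forall>y\<in>M. \<forall>z\<in>M. le y x \<and> le z x \<longrightarrow> le y z \<or> le z y)"

definition tlt :: "('a \<Rightarrow> 'a \<Rightarrow> bool) \<Rightarrow> 'a \<Rightarrow> 'a \<Rightarrow> bool" where
  "tlt le x y \<longleftrightarrow> le x y \<and> x \<noteq> y"

definition incomp :: "('a \<Rightarrow> 'a \<Rightarrow> bool) \<Rightarrow> 'a \<Rightarrow> 'a \<Rightarrow> bool" where
  "incomp le x y \<longleftrightarrow> \<not> le x y \<and> \<not> le y x"

definition troot :: "'a set \<Rightarrow> ('a \<Rightarrow> 'a \<Rightarrow> bool) \<Rightarrow> 'a" where
  "troot M le = (THE r. r \<in> M \<and> (\<forall>x\<in>M. le r x))"

definition leaves :: "'a set \<Rightarrow> ('a \<Rightarrow> 'a \<Rightarrow> bool) \<Rightarrow> 'a set" where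
  "leaves M le = {x \<in> M. \<forall>y\<in>M. le x y \<longrightarrow> y = x}"

definition tparent :: "'a set \<Rightarrow> ('a \<Rightarrow> 'a \<Rightarrow> bool) \<Rightarrow> 'a \<Rightarrow> 'a" where
  "tparent M le x = (THE p. p \<in> M \<and> tlt le p x \<and> (\<forall>q\<in>M. tlt le q x \<longrightarrow> le q p))"

definition SS :: "('z \<Rightarrow> bool \<Rightarrow> 'a \<Rightarrow> 'a \<Rightarrow> bool) \<Rightarrow> 'a \<Rightarrow> 'a \<Rightarrow> bool" where
  "SS S x y \<longleftrightarrow> (\<exists>Z a. S Z a x y)"

definition merge_model ::
  "'z set \<Rightarrow> 'a set \<Rightarrow> ('a \<Rightarrow> 'a \<Rightarrow> bool) \<Rightarrow> ('z \<Rightarrow> bool \<Rightarrow> 'a \<Rightarrow> 'a \<Rightarrow> bool) \<Rightarrow> bool" where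
  "merge_model \<Sigma> M le S \<longleftrightarrow>
     finite \<Sigma> \<and> finite M \<and> tree_order M le \<and>
     (\<forall>Z a x y. S Z a x y \<longrightarrow> Z \<in> \<Sigma> \<and> x \<in> M \<and> y \<in> M) \<and>
     (\<forall>x y. SS S x y \<longrightarrow> x = y \<or> incomp le x y) \<and>
     (\<not> (\<exists>x y x' y'. le x x' \<and> le y y' \<and> (x, y) \<noteq> (x', y') \<and> SS S x y' \<and> SS S x' y)) \<and>
     (\<forall>Z x y. \<not> (S Z False x y \<and> S Z True x y)) \<and>
     (\<forall>Z\<in>\<Sigma>. \<forall>u\<in>leaves M le. \<forall>v\<in>leaves M le. u \<noteq> v \<longrightarrow>
        (\<exists>x y. le x u \<and> le y v \<and> (\<exists>a. S Z a x y)))"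

text \<open>Closed real intervals are encoded as pairs (min, max).\<close>

definition interval_ranking ::
  "'a set \<Rightarrow> ('a \<Rightarrow> 'a \<Rightarrow> bool) \<Rightarrow> ('z \<Rightarrow> bool \<Rightarrow> 'a \<Rightarrow> 'a \<Rightarrow> bool) \<Rightarrow> ('a \<Rightarrow> real \<times> real) \<Rightarrow> bool" where
  "interval_ranking M le S I \<longleftrightarrow>
     (\<forall>x\<in>M. fst (I x) \<le> snd (I x)) \<and>
     (\<forall>x y. tlt le x y \<longrightarrow> snd (I y) < fst (I x)) \<and>
     (\<forall>x y. SS S x y \<longrightarrow> max (fst (I x)) (fst (I y)) \<le> min (snd (I x)) (snd (I y)))"

definition clean_f :: "'a set \<Rightarrow> ('a \<Rightarrow> 'a \<Rightarrow> bool) \<Rightarrow> ('a \<Rightarrow> real \<times> real) \<Rightarrow> 'a \<Rightarrow> real" where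
  "clean_f M le I x =
     (if x \<in> leaves M le then Min ((\<lambda>y. fst (I y)) ` leaves M le) else fst (I x))"

definition clean_g :: "'a set \<Rightarrow> ('a \<Rightarrow> 'a \<Rightarrow> bool) \<Rightarrow> ('a \<Rightarrow> real \<times> real) \<Rightarrow> 'a \<Rightarrow> nat" where
  "clean_g M le I x = card {clean_f M le I y | y. y \<in> M \<and> clean_f M le I y \<le> clean_f M le I x}"

definition cleaning :: "'a set \<Rightarrow> ('a \<Rightarrow> 'a \<Rightarrow> bool) \<Rightarrow> ('a \<Rightarrow> real \<times> real) \<Rightarrow> 'a \<Rightarrow> real \<times> real" where
  "cleaning M le I x =
     (if x = troot M le
      then (real (clean_g M le I (troot M le)), real (clean_g M le I (troot M le)))
      else (real (clean_g M le I x), real (clean_g M le I (tparent M le x)) - 1))"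

text \<open>A tau-bounded merge-walk of order n: u 0, ..., u n and v 1, ..., v (n+1).
  The maximum of the intersection of two (intersecting) intervals is the minimum of their maxima.\<close>

definition merge_walk ::
  "'a set \<Rightarrow> ('a \<Rightarrow> 'a \<Rightarrow> bool) \<Rightarrow> ('z \<Rightarrow> bool \<Rightarrow> 'a \<Rightarrow> 'a \<Rightarrow> bool) \<Rightarrow> ('a \<Rightarrow> real \<times> real)
   \<Rightarrow> real \<Rightarrow> nat \<Rightarrow> (nat \<Rightarrow> 'a) \<Rightarrow> (nat \<Rightarrow> 'a) \<Rightarrow> bool" where
  "merge_walk M le S I \<tau> n u v \<longleftrightarrow>
     \<tau> < fst (I (troot M le)) \<and>
     (\<forall>i\<le>n. u i \<in> M) \<and> (\<forall>i\<in>{1..n+1}. v i \<in> M) \<and>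
     u 0 \<in> leaves M le \<and>
     (\<forall>i\<in>{1..n+1}. le (u (i - 1)) (v i) \<or> le (v i) (u (i - 1))) \<and>
     (\<forall>i\<in>{1..n}. SS S (v i) (u i) \<and> min (snd (I (u i))) (snd (I (v i))) \<le> \<tau>) \<and>
     fst (I (v (n + 1))) \<le> \<tau> \<and> v (n + 1) \<noteq> troot M le \<and>
     \<tau> < fst (I (tparent M le (v (n + 1))))"

definition MWReach ::
  "'a set \<Rightarrow> ('a \<Rightarrow> 'a \<Rightarrow> bool) \<Rightarrow> ('z \<Rightarrow> bool \<Rightarrow> 'a \<Rightarrow> 'a \<Rightarrow> bool) \<Rightarrow> ('a \<Rightarrow> real \<times> real)
   \<Rightarrow> nat \<Rightarrow> 'a \<Rightarrow> real \<Rightarrow> 'a set" where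
  "MWReach M le S I r x \<tau> =
     {v (n + 1) | n u v. n \<le> r \<and> u 0 = x \<and> merge_walk M le S I \<tau> n u v}"

definition wr ::
  "'a set \<Rightarrow> ('a \<Rightarrow> 'a \<Rightarrow> bool) \<Rightarrow> ('z \<Rightarrow> bool \<Rightarrow> 'a \<Rightarrow> 'a \<Rightarrow> bool) \<Rightarrow> ('a \<Rightarrow> real \<times> real)
   \<Rightarrow> nat \<Rightarrow> nat" where
  "wr M le S I r =
     Max {card (MWReach M le S I r x \<tau>) | x \<tau>. x \<in> leaves M le \<and> \<tau> < fst (I (troot M le))}"

end

theory Submission
  imports Defs
begin


lemma tree_orderD:
  assumes "tree_order M le"
  shows tree_field: "\<And>x y. le x y \<Longrightarrow> x \<in> M \<and> y \<in> M"
    and tree_refl: "\<And>x. x \<in> M \<Longrightarrow> le x x"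
    and tree_antisym: "\<And>x y. x \<in> M \<Longrightarrow> y \<in> M \<Longrightarrow> le x y \<Longrightarrow> le y x \<Longrightarrow> x = y"
    and tree_trans: "\<And>x y z. x \<in> M \<Longrightarrow> y \<in> M \<Longrightarrow> z \<in> M \<Longrightarrow> le x y \<Longrightarrow> le y z \<Longrightarrow> le x z"
    and tree_root: "\<exists>r\<in>M. \<forall>x\<in>M. le r x"
    and tree_chain: "\<And>x y z. x \<in> M \<Longrightarrow> y \<in> M \<Longrightarrow> z \<in> M \<Longrightarrow> le y x \<Longrightarrow> le z x \<Longrightarrow> le y z \<or> le z y"
proof -
  note A = assms[unfolded tree_order_def]
  note c1 = conjunct1[OF A] and c2 = conjunct1[OF conjunct2[OF A]]
    and c3 = conjunct1[OF conjunct2[OF conjunct2[OF A]]]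
    and c4 = conjunct1[OF conjunct2[OF conjunct2[OF conjunct2[OF A]]]]
    and c5 = conjunct1[OF conjunct2[OF conjunct2[OF conjunct2[OF conjunct2[OF A]]]]]
    and c6 = conjunct2[OF conjunct2[OF conjunct2[OF conjunct2[OF conjunct2[OF A]]]]]
  show "\<And>x y. le x y \<Longrightarrow> x \<in> M \<and> y \<in> M" using c1 by blast
  show "\<And>x. x \<in> M \<Longrightarrow> le x x" using c2 by blast
  show "\<And>x y. x \<in> M \<Longrightarrow> y \<in> M \<Longrightarrow> le x y \<Longrightarrow> le y x \<Longrightarrow> x = y" using c3 by blast
  show "\<And>x y z. x \<in> M \<Longrightarrow> y \<in> M \<Longrightarrow> z \<in> M \<Longrightarrow> le x y \<Longrightarrow> le y z \<Longrightarrow> le x z" using c4 by blast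
  show "\<exists>r\<in>M. \<forall>x\<in>M. le r x" using c5 by blast
  show "\<And>x y z. x \<in> M \<Longrightarrow> y \<in> M \<Longrightarrow> z \<in> M \<Longrightarrow> le y x \<Longrightarrow> le z x \<Longrightarrow> le y z \<or> le z y" using c6 by blast
qed

lemma troot_props:
  assumes T: "tree_order M le"
  shows "troot M le \<in> M" "\<And>x. x \<in> M \<Longrightarrow> le (troot M le) x"
proof -
  from tree_root[OF T] obtain r where r: "r \<in> M" "\<forall>x\<in>M. le r x" by blast
  have "troot M le = r" unfolding troot_def
  proof (rule the_equality)
    show "r \<in> M \<and> (\<forall>x\<in>M. le r x)" using r by blast
    fix r' assume "r' \<in> M \<and> (\<forall>x\<in>M. le r' x)"
    then have "r' \<in> M" "le r' r" "le r r'" using r by auto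
    then show "r' = r" using r tree_antisym[OF T] by blast
  qed
  then show "troot M le \<in> M" "\<And>x. x \<in> M \<Longrightarrow> le (troot M le) x" using r by auto
qed

lemma tparent_props:
  assumes T: "tree_order M le" and fin: "finite M" and y: "y \<in> M" "y \<noteq> troot M le"
  shows "tparent M le y \<in> M" "tlt le (tparent M le y) y"
    "\<And>q. q \<in> M \<Longrightarrow> tlt le q y \<Longrightarrow> le q (tparent M le y)"
proof -
  define P where "P = {q \<in> M. tlt le q y}"
  define h where "h = (\<lambda>q. card {z \<in> M. le z q})"
  have rP: "troot M le \<in> P" using troot_props[OF T] y unfolding P_def tlt_def by auto
  have finP: "finite P" using fin unfolding P_def by auto
  have "Max (h ` P) \<in> h ` P" using finP rP by (intro Max_in) auto
  then obtain p where pP: "p \<in> P" and hp: "h p = Max (h ` P)" by auto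
  have pmax: "h q \<le> h p" if "q \<in> P" for q
    unfolding hp using finP that by (intro Max_ge) auto
  have ub: "le q p" if qP: "q \<in> P" for q
  proof (rule ccontr)
    assume nle: "\<not> le q p"
    have "le q y" "le p y" "q \<in> M" "p \<in> M" using qP pP unfolding P_def tlt_def by auto
    then have "le p q" using nle tree_chain[OF T y(1)] by blast
    have "{z \<in> M. le z p} \<subset> {z \<in> M. le z q}"
    proof
      show "{z \<in> M. le z p} \<subseteq> {z \<in> M. le z q}" using \<open>le p q\<close> tree_trans[OF T _ \<open>p \<in> M\<close> \<open>q \<in> M\<close>] by blast
      have "q \<in> {z \<in> M. le z q}" using tree_refl[OF T] \<open>q \<in> M\<close> by blast
      then show "{z \<in> M. le z p} \<noteq> {z \<in> M. le z q}" using nle by blast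
    qed
    then have "h p < h q" unfolding h_def using fin by (intro psubset_card_mono) auto
    then show False using pmax[OF qP] by simp
  qed
  define p' where "p' = tparent M le y"
  have "p' = p" unfolding p'_def tparent_def
  proof (rule the_equality)
    show "p \<in> M \<and> tlt le p y \<and> (\<forall>q\<in>M. tlt le q y \<longrightarrow> le q p)"
      using pP ub unfolding P_def by auto
    fix p2 assume "p2 \<in> M \<and> tlt le p2 y \<and> (\<forall>q\<in>M. tlt le q y \<longrightarrow> le q p2)"
    then have "le p p2" "le p2 p" "p2 \<in> M" "p \<in> M" using pP ub unfolding P_def by auto
    then show "p2 = p" using tree_antisym[OF T] by blast
  qed
  then show "tparent M le y \<in> M" "tlt le (tparent M le y) y"
    "\<And>q. q \<in> M \<Longrightarrow> tlt le q y \<Longrightarrow> le q (tparent M le y)"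
    using pP ub unfolding p'_def P_def by auto
qed

theorem lemma5p5:
  fixes \<Sigma> :: "'z set" and M :: "'a set" and le :: "'a \<Rightarrow> 'a \<Rightarrow> bool"
    and S :: "'z \<Rightarrow> bool \<Rightarrow> 'a \<Rightarrow> 'a \<Rightarrow> bool" and I :: "'a \<Rightarrow> real \<times> real" and r :: nat
  assumes "merge_model \<Sigma> M le S"
    and "interval_ranking M le S I"
    and "r \<ge> 1"
  shows "wr M le S (cleaning M le I) r \<le> wr M le S I r"
proof -
  note MM = assms(1)[unfolded merge_model_def]
  have fin: "finite M" using conjunct1[OF conjunct2[OF MM]] .
  have T: "tree_order M le" using conjunct1[OF conjunct2[OF conjunct2[OF MM]]] .
  have Tf: "\<And>x y. le x y \<Longrightarrow> x \<in> M \<and> y \<in> M" "\<And>x. x \<in> M \<Longrightarrow> le x x"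
    using tree_field[OF T] tree_refl[OF T] by blast+
  note IR = assms(2)[unfolded interval_ranking_def]
  have I1: "\<And>x. x \<in> M \<Longrightarrow> fst (I x) \<le> snd (I x)" using conjunct1[OF IR] by blast
  have I2: "\<And>x y. tlt le x y \<Longrightarrow> snd (I y) < fst (I x)" using conjunct1[OF conjunct2[OF IR]] by blast
  have I3: "\<And>x y. SS S x y \<Longrightarrow> max (fst (I x)) (fst (I y)) \<le> min (snd (I x)) (snd (I y))"
    using conjunct2[OF conjunct2[OF IR]] by blast
  define rt where "rt = troot M le"
  define par where "par = tparent M le"
  define L where "L = leaves M le"
  define f where "f = clean_f M le I"
  define g where "g = clean_g M le I"
  define C where "C = cleaning M le I"
  have rtM: "rt \<in> M" and rtle: "\<And>x. x \<in> M \<Longrightarrow> le rt x"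
    using troot_props[OF T] unfolding rt_def by auto
  have parM: "\<And>y. y \<in> M \<Longrightarrow> y \<noteq> rt \<Longrightarrow> par y \<in> M"
    and parlt: "\<And>y. y \<in> M \<Longrightarrow> y \<noteq> rt \<Longrightarrow> tlt le (par y) y"
    using tparent_props[OF T fin] unfolding rt_def par_def by auto
  have leafD: "\<And>x z. x \<in> L \<Longrightarrow> le x z \<Longrightarrow> z = x" using Tf(1) unfolding L_def leaves_def by blast
  have LM: "L \<subseteq> M" unfolding L_def leaves_def by auto
  have ltnotleaf: "\<And>x z. tlt le x z \<Longrightarrow> x \<notin> L" using leafD unfolding tlt_def by blast
  have parnL: "\<And>y. y \<in> M \<Longrightarrow> y \<noteq> rt \<Longrightarrow> par y \<notin> L" using parlt ltnotleaf by blast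
  have fnl: "\<And>y. y \<notin> L \<Longrightarrow> f y = fst (I y)" unfolding f_def clean_f_def L_def by simp
  have fstC: "\<And>y. fst (C y) = real (g y)" unfolding C_def cleaning_def g_def rt_def by simp
  have sndC: "\<And>y. y \<noteq> rt \<Longrightarrow> snd (C y) = real (g (par y)) - 1"
    unfolding C_def cleaning_def g_def rt_def par_def by simp
  have sndCrt: "snd (C rt) = real (g rt)" unfolding C_def cleaning_def g_def rt_def by simp
  have gdef: "\<And>y. g y = card {f z | z. z \<in> M \<and> f z \<le> f y}"
    unfolding g_def f_def clean_g_def by simp
  have finF: "\<And>c. finite {f z | z. z \<in> M \<and> f z \<le> c}"
  proof -
    fix c
    have "{f z | z. z \<in> M \<and> f z \<le> c} \<subseteq> f ` M" by auto
    then show "finite {f z | z. z \<in> M \<and> f z \<le> c}" using fin finite_subset by blast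
  qed
  have gmono: "\<And>y z. f y \<le> f z \<Longrightarrow> g y \<le> g z"
    unfolding gdef by (rule card_mono[OF finF]) auto
  have gstrict: "\<And>y z. z \<in> M \<Longrightarrow> f y < f z \<Longrightarrow> g y < g z"
  proof -
    fix y z assume zM: "z \<in> M" and lt: "f y < f z"
    have "{f w | w. w \<in> M \<and> f w \<le> f y} \<subset> {f w | w. w \<in> M \<and> f w \<le> f z}"
    proof
      show "{f w | w. w \<in> M \<and> f w \<le> f y} \<subseteq> {f w | w. w \<in> M \<and> f w \<le> f z}" using lt by auto
      have "f z \<in> {f w | w. w \<in> M \<and> f w \<le> f z}" using zM by auto
      moreover have "f z \<notin> {f w | w. w \<in> M \<and> f w \<le> f y}" using lt by auto
      ultimately show "{f w | w. w \<in> M \<and> f w \<le> f y} \<noteq> {f w | w. w \<in> M \<and> f w \<le> f z}" by blast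
    qed
    then show "g y < g z" unfolding gdef by (rule psubset_card_mono[OF finF])
  qed
  have subM: "MWReach M le S J r y s \<subseteq> M" for J y s
  proof
    fix w assume "w \<in> MWReach M le S J r y s"
    then obtain n u v where wv: "w = v (n+1)" and mw: "merge_walk M le S J s n u v"
      unfolding MWReach_def by blast
    from mw have "\<forall>i\<in>{1..n+1}. v i \<in> M" unfolding merge_walk_def by (elim conjE) assumption
    then show "w \<in> M" using wv by simp
  qed
  have cardM: "card (MWReach M le S J r y s) \<le> card M" for J y s
    by (rule card_mono[OF fin subM])
  have finW: "\<And>J. finite {card (MWReach M le S J r y s) | y s. y \<in> L \<and> s < fst (J rt)}"
  proof -
    fix J :: "'a \<Rightarrow> real \<times> real"
    have "{card (MWReach M le S J r y s) | y s. y \<in> L \<and> s < fst (J rt)} \<subseteq> {0..card M}"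
      using cardM by auto
    then show "finite {card (MWReach M le S J r y s) | y s. y \<in> L \<and> s < fst (J rt)}"
      using finite_subset by blast
  qed
  have wrge: "\<And>y s. y \<in> L \<Longrightarrow> s < fst (I rt) \<Longrightarrow> card (MWReach M le S I r y s) \<le> wr M le S I r"
    unfolding wr_def L_def[symmetric] rt_def[symmetric] by (rule Max_ge[OF finW]) auto
  have key: "card (MWReach M le S C r x t) \<le> wr M le S I r" if xL: "x \<in> L" and t: "t < fst (C rt)" for x t
  proof -
    have xM: "x \<in> M" using xL LM by auto
    have tg: "t < real (g rt)" using t fstC by simp
    define Th where "Th = {f z | z. z \<in> M \<and> t < real (g z)}"
    have finTh: "finite Th"
    proof -
      have "Th \<subseteq> f ` M" unfolding Th_def by auto
      then show ?thesis using fin finite_subset by blast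
    qed
    have neTh: "Th \<noteq> {}" unfolding Th_def using rtM tg by auto
    define \<theta> where "\<theta> = Min Th"
    have "\<theta> \<in> Th" unfolding \<theta>_def using Min_in[OF finTh neTh] .
    then obtain z0 where z0: "z0 \<in> M" "t < real (g z0)" "f z0 = \<theta>" unfolding Th_def by auto
    have thle: "\<And>z. z \<in> M \<Longrightarrow> t < real (g z) \<Longrightarrow> \<theta> \<le> f z"
      unfolding \<theta>_def using Min_le[OF finTh] unfolding Th_def by blast
    have T1: "\<And>y. real (g y) \<le> t \<Longrightarrow> f y < \<theta>"
    proof (rule ccontr)
      fix y assume a: "real (g y) \<le> t" and "\<not> f y < \<theta>"
      then have "f z0 \<le> f y" using z0 by simp
      then have "g z0 \<le> g y" by (rule gmono)
      then show False using a z0(2) by linarith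
    qed
    have T3: "\<And>y. y \<in> M \<Longrightarrow> real (g y) - 1 \<le> t \<Longrightarrow> f y \<le> \<theta>"
    proof (rule ccontr)
      fix y assume yM: "y \<in> M" and a: "real (g y) - 1 \<le> t" and "\<not> f y \<le> \<theta>"
      then have "f z0 < f y" using z0 by simp
      then have "g z0 < g y" using gstrict yM by blast
      then have "real (g z0) + 1 \<le> real (g y)" by linarith
      then show False using a z0(2) by linarith
    qed
    define V where "V = {fst (I y) | y. y \<in> M} \<union> {snd (I y) | y. y \<in> M}"
    have finV: "finite V"
    proof -
      have "V \<subseteq> (\<lambda>y. fst (I y)) ` M \<union> (\<lambda>y. snd (I y)) ` M" unfolding V_def by auto
      then show ?thesis using fin finite_subset by blast
    qed
    define \<tau> where "\<tau> = Max (insert (\<theta> - 1) {c \<in> V. c < \<theta>})"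
    have finV': "finite (insert (\<theta> - 1) {c \<in> V. c < \<theta>})" using finV by auto
    have tau_lt: "\<tau> < \<theta>" unfolding \<tau>_def using finV' by (subst Max_less_iff) auto
    have tau_ge: "\<And>c. c \<in> V \<Longrightarrow> c < \<theta> \<Longrightarrow> c \<le> \<tau>" unfolding \<tau>_def using finV' by (intro Max_ge) auto
    have fst_tau: "\<And>y. y \<in> M \<Longrightarrow> fst (I y) < \<theta> \<Longrightarrow> fst (I y) \<le> \<tau>"
      using tau_ge unfolding V_def by blast
    have snd_tau: "\<And>y. y \<in> M \<Longrightarrow> snd (I y) < \<theta> \<Longrightarrow> snd (I y) \<le> \<tau>"
      using tau_ge unfolding V_def by blast
    have stepw: "\<And>w. w \<in> M \<Longrightarrow> snd (C w) \<le> t \<Longrightarrow> snd (I w) < \<theta>"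
    proof -
      fix w assume wM: "w \<in> M" and a: "snd (C w) \<le> t"
      have wrt: "w \<noteq> rt" using a sndCrt tg by auto
      have "real (g (par w)) - 1 \<le> t" using a sndC[OF wrt] by simp
      then have "f (par w) \<le> \<theta>" using T3 parM[OF wM wrt] by blast
      then have "fst (I (par w)) \<le> \<theta>" using fnl parnL[OF wM wrt] by simp
      moreover have "snd (I w) < fst (I (par w))" using I2 parlt[OF wM wrt] by blast
      ultimately show "snd (I w) < \<theta>" by simp
    qed
    have step2: "\<And>a b. a \<in> M \<Longrightarrow> b \<in> M \<Longrightarrow> min (snd (C a)) (snd (C b)) \<le> t \<Longrightarrow>
        snd (I a) < \<theta> \<or> snd (I b) < \<theta>"
    proof -
      fix a b assume "a \<in> M" "b \<in> M" "min (snd (C a)) (snd (C b)) \<le> t"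
      then show "snd (I a) < \<theta> \<or> snd (I b) < \<theta>" using stepw
        by (metis min_le_iff_disj)
    qed
    have fstu: "\<And>a b. SS S a b \<Longrightarrow> a \<in> M \<Longrightarrow> b \<in> M \<Longrightarrow> min (snd (C b)) (snd (C a)) \<le> t \<Longrightarrow>
        fst (I a) < \<theta> \<and> fst (I b) < \<theta>"
    proof -
      fix a b assume s: "SS S a b" and M': "a \<in> M" "b \<in> M" and m: "min (snd (C b)) (snd (C a)) \<le> t"
      have "max (fst (I a)) (fst (I b)) \<le> min (snd (I a)) (snd (I b))" using I3[OF s] .
      moreover have "snd (I b) < \<theta> \<or> snd (I a) < \<theta>" using step2[OF M'(2) M'(1) m] .
      ultimately show "fst (I a) < \<theta> \<and> fst (I b) < \<theta>" by linarith
    qed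
    have unpack: "t < fst (C rt) \<and> (\<forall>i\<le>n. u i \<in> M) \<and> (\<forall>i\<in>{1..n+1}. v i \<in> M) \<and> u 0 \<in> L \<and>
        (\<forall>i\<in>{1..n+1}. le (u (i - 1)) (v i) \<or> le (v i) (u (i - 1))) \<and>
        (\<forall>i\<in>{1..n}. SS S (v i) (u i) \<and> min (snd (C (u i))) (snd (C (v i))) \<le> t) \<and>
        fst (C (v (n + 1))) \<le> t \<and> v (n + 1) \<noteq> rt \<and> t < fst (C (par (v (n + 1))))"
      if "merge_walk M le S C t n u v" for n u v
      using that unfolding merge_walk_def rt_def par_def L_def by blast
    have rtnL: "rt \<notin> L" if "merge_walk M le S C t n u v" for n u v
    proof -
      have "v (n+1) \<in> M" "v (n+1) \<noteq> rt" using unpack[OF that] by auto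
      then show ?thesis using ltnotleaf[of rt "v (n+1)"] rtle unfolding tlt_def by auto
    qed
    have tau_rt: "\<tau> < fst (I rt)" if "merge_walk M le S C t n u v" for n u v
    proof -
      have "\<theta> \<le> f rt" using thle rtM tg by blast
      then show ?thesis using fnl[OF rtnL[OF that]] tau_lt by simp
    qed
    have WA: "merge_walk M le S I \<tau> n u v"
      if fx: "fst (I x) < \<theta>" and u0: "u 0 = x" and W: "merge_walk M le S C t n u v" for n u v
    proof -
      note U = unpack[OF W]
      define w where "w = v (n+1)"
      have wM: "w \<in> M" using U w_def by auto
      have wrt: "w \<noteq> rt" using U w_def by auto
      have steps: "\<forall>i\<in>{1..n}. SS S (v i) (u i) \<and> min (snd (I (u i))) (snd (I (v i))) \<le> \<tau>"
      proof
        fix i assume i: "i \<in> {1..n}"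
        have M': "u i \<in> M" "v i \<in> M" using U i by auto
        have s: "SS S (v i) (u i)" "min (snd (C (u i))) (snd (C (v i))) \<le> t" using U i by auto
        have "snd (I (u i)) < \<theta> \<or> snd (I (v i)) < \<theta>" using step2[OF M' s(2)] .
        then have "snd (I (u i)) \<le> \<tau> \<or> snd (I (v i)) \<le> \<tau>" using snd_tau M' by blast
        then show "SS S (v i) (u i) \<and> min (snd (I (u i))) (snd (I (v i))) \<le> \<tau>" using s by linarith
      qed
      have fw: "f w < \<theta>" using T1 U fstC unfolding w_def by simp
      have "\<theta> \<le> f (par w)" using thle parM[OF wM wrt] U fstC unfolding w_def by simp
      then have tau_par: "\<tau> < fst (I (par w))" using fnl parnL[OF wM wrt] tau_lt by simp
      have fstw: "fst (I w) < \<theta>"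
      proof (cases "w \<in> L")
        case False then show ?thesis using fw fnl by simp
      next
        case True
        have un: "u n \<in> M" using U by auto
        have c: "\<forall>i\<in>{1..n+1}. le (u (i - 1)) (v i) \<or> le (v i) (u (i - 1))" using U by blast
        have "le (u (n+1-1)) (v (n+1)) \<or> le (v (n+1)) (u (n+1-1))" using bspec[OF c, of "n+1"] by simp
        then have "le (u n) w \<or> le w (u n)" unfolding w_def by simp
        then have lew: "le (u n) w" using leafD[OF True] Tf(2) wM by metis
        have fun_lt: "fst (I (u n)) < \<theta>"
        proof (cases "n = 0")
          case True then show ?thesis using u0 fx by simp
        next
          case False
          then have n1: "n \<in> {1..n}" by simp
          have M': "u n \<in> M" "v n \<in> M" using U n1 by auto
          have "SS S (v n) (u n)" "min (snd (C (u n))) (snd (C (v n))) \<le> t" using U n1 by auto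
          then show ?thesis using fstu M' by blast
        qed
        show ?thesis
        proof (cases "u n = w")
          case True then show ?thesis using fun_lt by simp
        next
          case False
          then have "snd (I w) < fst (I (u n))" using I2 lew unfolding tlt_def by blast
          then show ?thesis using I1[OF wM] fun_lt by simp
        qed
      qed
      have "fst (I w) \<le> \<tau>" using fst_tau[OF wM fstw] .
      then show ?thesis
        unfolding merge_walk_def rt_def[symmetric] par_def[symmetric] L_def[symmetric]
        using U steps tau_par tau_rt[OF W] wrt unfolding w_def by auto
    qed
    have WB: "v (n+1) = x"
      if fx: "\<theta> \<le> fst (I x)" and u0: "u 0 = x" and W: "merge_walk M le S C t n u v" for n u v
    proof -
      note U = unpack[OF W]
      have lev1: "le (v 1) x"
      proof -
        have "le x (v 1) \<or> le (v 1) x" using U u0 by force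
        then show ?thesis using leafD[OF xL] Tf(2) xM by metis
      qed
      have v1M: "v 1 \<in> M" using U by auto
      have n0: "n = 0"
      proof (rule ccontr)
        assume "n \<noteq> 0"
        then have n1: "1 \<in> {1..n}" by simp
        have M': "v 1 \<in> M" "u 1 \<in> M" using U n1 by auto
        have "SS S (v 1) (u 1)" "min (snd (C (u 1))) (snd (C (v 1))) \<le> t" using U n1 by auto
        then have fv1: "fst (I (v 1)) < \<theta>" using fstu M' by blast
        have "fst (I x) < \<theta>"
        proof (cases "v 1 = x")
          case True then show ?thesis using fv1 by simp
        next
          case False
          then have "snd (I x) < fst (I (v 1))" using I2 lev1 unfolding tlt_def by blast
          then show ?thesis using I1[OF xM] fv1 by simp
        qed
        then show False using fx by simp
      qed
      show ?thesis
      proof (rule ccontr)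
        assume ne: "v (n+1) \<noteq> x"
        then have ne1: "v 1 \<noteq> x" using n0 by simp
        then have tl: "tlt le (v 1) x" using lev1 unfolding tlt_def by blast
        then have "v 1 \<notin> L" using ltnotleaf by blast
        then have fv: "f (v 1) = fst (I (v 1))" using fnl by blast
        have "snd (I x) < fst (I (v 1))" using I2 tl by blast
        then have "\<theta> < f (v 1)" using fv I1[OF xM] fx by simp
        moreover have "f (v 1) < \<theta>" using T1 U fstC n0 by simp
        ultimately show False by simp
      qed
    qed
    show ?thesis
    proof (cases "MWReach M le S C r x t = {}")
      case True then show ?thesis by simp
    next
      case False
      then obtain n0 u0 v0 where W0: "merge_walk M le S C t n0 u0 v0" and u00: "u0 0 = x"
        unfolding MWReach_def by blast
      show ?thesis
      proof (cases "fst (I x) < \<theta>")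
        case True
        have sub: "MWReach M le S C r x t \<subseteq> MWReach M le S I r x \<tau>"
          unfolding MWReach_def using WA[OF True] by blast
        have "card (MWReach M le S C r x t) \<le> card (MWReach M le S I r x \<tau>)"
          using sub subM fin by (meson card_mono finite_subset)
        also have "\<dots> \<le> wr M le S I r" using wrge[OF xL tau_rt[OF W0]] .
        finally show ?thesis .
      next
        case False
        have sub: "MWReach M le S C r x t \<subseteq> {x}"
          unfolding MWReach_def using WB False by force
        have "v0 (n0+1) \<noteq> rt" using unpack[OF W0] by auto
        moreover have "v0 (n0+1) = x" using WB[OF _ u00 W0] False by simp
        ultimately have xrt: "x \<noteq> rt" by simp
        have tl: "tlt le rt x" using rtle[OF xM] xrt unfolding tlt_def by simp
        have mw: "merge_walk M le S I (fst (I x)) 0 (\<lambda>_. x) (\<lambda>_. x)"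
          unfolding merge_walk_def rt_def[symmetric] par_def[symmetric] L_def[symmetric]
          using I2[OF tl] I1[OF xM] xM xL Tf(2) xrt I2[OF parlt[OF xM xrt]] by auto
        have "\<exists>n u v. x = v (n+1) \<and> n \<le> r \<and> u 0 = x \<and> merge_walk M le S I (fst (I x)) n u v"
          by (rule exI[of _ 0], rule exI[of _ "\<lambda>_. x"], rule exI[of _ "\<lambda>_. x"]) (simp add: mw)
        then have xin: "x \<in> MWReach M le S I r x (fst (I x))" unfolding MWReach_def by blast
        have "card (MWReach M le S C r x t) \<le> card {x}" using sub by (intro card_mono) auto
        also have "\<dots> \<le> card (MWReach M le S I r x (fst (I x)))"
          using xin subM fin by (metis card_mono empty_subsetI finite_subset insert_subset)
        also have "\<dots> \<le> wr M le S I r" using wrge[OF xL] I2[OF tl] I1[OF xM] by simp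
        finally show ?thesis .
      qed
    qed
  qed
  show ?thesis
  proof (cases "L = {}")
    case True
    then show ?thesis unfolding wr_def L_def[symmetric] by simp
  next
    case False
    then obtain y where yL: "y \<in> L" by blast
    have eqC: "wr M le S C r = Max {card (MWReach M le S C r y s) | y s. y \<in> L \<and> s < fst (C rt)}"
      by (simp add: wr_def L_def rt_def)
    have neC: "{card (MWReach M le S C r y s) | y s. y \<in> L \<and> s < fst (C rt)} \<noteq> {}"
    proof -
      have "card (MWReach M le S C r y (fst (C rt) - 1)) \<in> {card (MWReach M le S C r y s) | y s. y \<in> L \<and> s < fst (C rt)}"
        unfolding mem_Collect_eq by (rule exI[of _ y], rule exI[of _ "fst (C rt) - 1"]) (simp add: yL)
      then show ?thesis by blast
    qed
    show ?thesis unfolding C_def[symmetric] eqC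
      using finW[of C] neC key by (subst Max_le_iff) auto
  qed
qed

end
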